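(* For every positive integer $n$, let $B_n$ be the $n\times n$ matrix over $\mathbb{Z}$ whose $(i,j)$-entry ($1\le i,j\le n$) is $1$ if $i+j$ is a power of two and $0$ otherwise. Then $\det B_n\in\{1,-1\}$.
   Context: Powers of two are $1,2,4,8,\ldots$. *)

theory Defs
  imports "Jordan_Normal_Form.Determinant"
begin

definition is_pow2 :: "nat \<Rightarrow> bool" where
  "is_pow2 m \<longleftrightarrow> (\<exists>k. m = 2 ^ k)"

text \<open>B n: the n x n integer matrix with (i,j)-entry (1-based indices i,j)
  equal to 1 if i + j is a power of two, else 0. JNF matrices are 0-indexed,
  so row i, column j (0-based) correspond to the 1-based indices i+1, j+1.\<close>
definition B :: "nat \<Rightarrow> int mat" where
  "B n = mat n n (\<lambda>(i, j). if is_pow2 ((i + 1) + (j + 1)) then 1 else 0)"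

end

theory Submission
  imports Defs
begin

lemma det_reduce:
  fixes A :: "'a::comm_ring_1 mat"
  assumes A: "A \<in> carrier_mat n n" and mn: "m \<le> n" and g: "g permutes {m..<n}"
  and one: "\<And>i. i \<in> {m..<n} \<Longrightarrow> A $$ (i, g i) = 1"
  and forced: "\<And>\<sigma> i. \<sigma> permutes {0..<n} \<Longrightarrow> (\<Prod>i=0..<n. A $$ (i, \<sigma> i)) \<noteq> 0 \<Longrightarrow> i \<in> {m..<n} \<Longrightarrow> \<sigma> i = g i"
  shows "det A = signof g * det (mat m m (\<lambda>(i,j). A $$ (i,j)))"
proof -
  let ?f = "\<lambda>\<sigma>. signof \<sigma> * (\<Prod>i=0..<n. A $$ (i, \<sigma> i))"
  define P where "P k = {\<sigma>. \<sigma> permutes {0..<k}}" for k :: nat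
  define S where "S = {\<sigma> \<in> P n. \<forall>i\<in>{m..<n}. \<sigma> i = g i}"
  have gn: "g permutes {0..<n}" using g by (rule permutes_subset) auto
  have "det A = sum ?f (P n)" using det_def'[OF A] P_def by simp
  also have "\<dots> = sum ?f S"
  proof (rule sum.mono_neutral_right)
    show "finite (P n)" unfolding P_def by (rule finite_permutations) simp
    show "S \<subseteq> P n" unfolding S_def by auto
    show "\<forall>\<sigma>\<in>P n - S. ?f \<sigma> = 0"
    proof
      fix \<sigma> assume s: "\<sigma> \<in> P n - S"
      then have "(\<Prod>i=0..<n. A $$ (i, \<sigma> i)) = 0" using forced unfolding S_def P_def by blast
      then show "?f \<sigma> = 0" by simp
    qed
  qed
  also have "\<dots> = sum (\<lambda>\<tau>. ?f (\<tau> \<circ> g)) (P m)"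
  proof (rule sum.reindex_bij_betw[symmetric])
    show "bij_betw (\<lambda>\<tau>. \<tau> \<circ> g) (P m) S"
    proof (rule bij_betw_byWitness[where f' = "\<lambda>\<sigma>. \<sigma> \<circ> Hilbert_Choice.inv g"])
      show "\<forall>a\<in>P m. a \<circ> g \<circ> Hilbert_Choice.inv g = a"
        using permutes_inv_o(1)[OF g] by (simp add: o_assoc[symmetric])
      show "\<forall>a\<in>S. a \<circ> Hilbert_Choice.inv g \<circ> g = a"
        using permutes_inv_o(2)[OF g] by (simp add: o_assoc[symmetric])
      show "(\<lambda>\<tau>. \<tau> \<circ> g) ` P m \<subseteq> S"
      proof
        fix x assume "x \<in> (\<lambda>\<tau>. \<tau> \<circ> g) ` P m"
        then obtain \<tau> where t: "\<tau> permutes {0..<m}" and x: "x = \<tau> \<circ> g" unfolding P_def by auto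
        have tn: "\<tau> permutes {0..<n}" using t mn by (intro permutes_subset[OF t]) auto
        have "x permutes {0..<n}" unfolding x by (rule permutes_compose[OF gn tn])
        moreover have "\<forall>i\<in>{m..<n}. x i = g i"
        proof
          fix i assume i: "i \<in> {m..<n}"
          then have "g i \<in> {m..<n}" using permutes_in_image[OF g] by simp
          then have "\<tau> (g i) = g i" using permutes_not_in[OF t] by auto
          then show "x i = g i" using x by simp
        qed
        ultimately show "x \<in> S" unfolding S_def P_def by simp
      qed
      show "(\<lambda>\<sigma>. \<sigma> \<circ> Hilbert_Choice.inv g) ` S \<subseteq> P m"
      proof
        fix x assume "x \<in> (\<lambda>\<sigma>. \<sigma> \<circ> Hilbert_Choice.inv g) ` S"
        then obtain \<sigma> where s: "\<sigma> permutes {0..<n}" and sg: "\<forall>i\<in>{m..<n}. \<sigma> i = g i"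
          and x: "x = \<sigma> \<circ> Hilbert_Choice.inv g" unfolding S_def P_def by auto
        have "x permutes {0..<n}" unfolding x by (rule permutes_compose[OF permutes_inv[OF gn] s])
        then have "x permutes {0..<m}"
        proof (rule permutes_superset)
          fix y assume y: "y \<in> {0..<n} - {0..<m}"
          then have "Hilbert_Choice.inv g y \<in> {m..<n}" using permutes_in_image[OF permutes_inv[OF g]] by auto
          then have "\<sigma> (Hilbert_Choice.inv g y) = g (Hilbert_Choice.inv g y)" using sg by blast
          then show "x y = y" using x permutes_inverses(1)[OF g] by simp
        qed
        then show "x \<in> P m" unfolding P_def by simp
      qed
    qed
  qed
  also have "\<dots> = sum (\<lambda>\<tau>. signof g * (signof \<tau> * (\<Prod>i=0..<m. A $$ (i, \<tau> i)))) (P m)"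
  proof (rule sum.cong[OF refl])
    fix \<tau> assume "\<tau> \<in> P m"
    then have t: "\<tau> permutes {0..<m}" unfolding P_def by simp
    have sg: "signof (\<tau> \<circ> g) = (signof \<tau> * signof g :: 'a)"
      by (rule signof_compose[OF t g[THEN permutes_subset[of _ _ "{0..<n}"]]]) auto
    have p1: "(\<Prod>i=0..<m. A $$ (i, (\<tau> \<circ> g) i)) = (\<Prod>i=0..<m. A $$ (i, \<tau> i))"
      by (rule prod.cong[OF refl]) (simp add: permutes_not_in[OF g])
    have p2: "(\<Prod>i=m..<n. A $$ (i, (\<tau> \<circ> g) i)) = 1"
    proof (rule prod.neutral, rule ballI)
      fix i assume i: "i \<in> {m..<n}"
      then have "g i \<in> {m..<n}" using permutes_in_image[OF g] by simp
      then have "\<tau> (g i) = g i" using permutes_not_in[OF t] by auto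
      then show "A $$ (i, (\<tau> \<circ> g) i) = 1" using one[OF i] by simp
    qed
    have "(\<Prod>i=0..<n. A $$ (i, (\<tau> \<circ> g) i)) = (\<Prod>i=0..<m. A $$ (i, (\<tau> \<circ> g) i)) * (\<Prod>i=m..<n. A $$ (i, (\<tau> \<circ> g) i))"
      using prod.atLeastLessThan_concat[of 0 m n] mn by (metis zero_le)
    then show "?f (\<tau> \<circ> g) = signof g * (signof \<tau> * (\<Prod>i=0..<m. A $$ (i, \<tau> i)))"
      using p1 p2 sg by (simp add: mult_ac)
  qed
  also have "\<dots> = signof g * det (mat m m (\<lambda>(i,j). A $$ (i,j)))"
  proof -
    have "det (mat m m (\<lambda>(i,j). A $$ (i,j))) = sum (\<lambda>\<tau>. signof \<tau> * (\<Prod>i=0..<m. A $$ (i, \<tau> i))) (P m)"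
      unfolding det_def' [OF mat_carrier] P_def
    proof (rule sum.cong[OF refl])
      fix \<tau> assume "\<tau> \<in> {\<tau>. \<tau> permutes {0..<m}}"
      then have t: "\<tau> permutes {0..<m}" by simp
      show "signof \<tau> * (\<Prod>i = 0..<m. mat m m (\<lambda>(i, j). A $$ (i, j)) $$ (i, \<tau> i)) = signof \<tau> * (\<Prod>i=0..<m. A $$ (i, \<tau> i))"
        by (intro arg_cong[where f="\<lambda>x. signof \<tau> * x"] prod.cong refl)
          (use permutes_in_image[OF t] in auto)
    qed
    then show ?thesis by (simp add: sum_distrib_left)
  qed
  finally show ?thesis .
qed

lemma pow_unique:
  assumes "is_pow2 s" "h = (2::nat)^k" "h < s" "s < 4*h"
  shows "s = 2*h"
proof -
  obtain t where t: "s = 2^t" using assms(1) unfolding is_pow2_def by auto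
  have "k < t" using assms(2,3) t by (metis power_less_imp_less_exp one_less_numeral_iff semiring_norm(76))
  moreover have "2^t < (2::nat)^(k+2)" using assms(2,4) t by (simp add: power_add)
  then have "t < k+2" by (metis power_less_imp_less_exp one_less_numeral_iff semiring_norm(76))
  ultimately have "t = k+1" by simp
  then show ?thesis using t assms(2) by simp
qed

lemma det_B0: "det (B 0) = 1"
  unfolding det_def B_def by (simp add: permutes_empty)

lemma B_all: "det (B n) \<in> {1, -1}"
proof (induction n rule: less_induct)
  case (less n)
  show ?case
  proof (cases "n = 0")
    case True then show ?thesis using det_B0 by simp
  next
    case False
    then obtain k where k: "2^k \<le> n" "n < 2^(k+1)" using ex_power_ivl1[of 2 n] by auto
    define h :: nat where "h = 2^k"
    have hn: "h \<le> n" "n < 2*h" using k h_def by auto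
    have h1: "h \<ge> 1" using h_def by simp
    define m where "m = 2*h - n - 1"
    define g where "g = (\<lambda>i. if m \<le> i \<and> i < n then 2*h - 2 - i else i)"
    have mn: "m < n" using hn m_def by auto
    have gS: "\<And>i. i \<in> {m..<n} \<Longrightarrow> g i \<in> {m..<n} \<and> g (g i) = i \<and> i + g i = 2*h - 2"
      using hn h1 unfolding g_def m_def by auto
    have gperm: "g permutes {m..<n}"
    proof (rule bij_imp_permutes)
      show "bij_betw g {m..<n} {m..<n}"
        by (rule bij_betw_byWitness[where f'=g]) (use gS in auto)
      show "\<And>x. x \<notin> {m..<n} \<Longrightarrow> g x = x" unfolding g_def by auto
    qed
    have Bc: "B n \<in> carrier_mat n n" unfolding B_def by simp
    have one: "B n $$ (i, g i) = 1" if i: "i \<in> {m..<n}" for i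
    proof -
      have "g i < n" "i < n" using gS[OF i] i by auto
      moreover have "is_pow2 (i + 1 + (g i + 1))"
        unfolding is_pow2_def using gS[OF i] hn h1 h_def by (intro exI[of _ "k+1"]) auto
      ultimately show ?thesis unfolding B_def by simp
    qed
    have forced: "\<sigma> i = g i" if s: "\<sigma> permutes {0..<n}" and p: "(\<Prod>i=0..<n. B n $$ (i, \<sigma> i)) \<noteq> 0"
      and i: "i \<in> {m..<n}" for \<sigma> i
    proof -
      have pw: "is_pow2 (a + \<sigma> a + 2)" if a: "a < n" for a
      proof -
        have "B n $$ (a, \<sigma> a) \<noteq> 0"
        proof
          assume "B n $$ (a, \<sigma> a) = 0"
          then have "(\<Prod>i=0..<n. B n $$ (i, \<sigma> i)) = 0" using a by (intro prod_zero) auto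
          then show False using p by simp
        qed
        moreover have "\<sigma> a < n" using permutes_in_image[OF s] a by simp
        ultimately show ?thesis unfolding B_def using a by (auto split: if_splits simp: add.commute add.left_commute)
      qed
      have key: "a + \<sigma> a = 2*h - 2" if a: "a < n" and c: "h - 1 \<le> a \<or> h - 1 \<le> \<sigma> a" for a
      proof -
        have sa: "\<sigma> a < n" using permutes_in_image[OF s] a by simp
        have "a + \<sigma> a + 2 = 2*h"
          by (rule pow_unique[OF pw[OF a] h_def]) (use c sa a hn h1 in auto)
        then show ?thesis by simp
      qed
      show ?thesis
      proof (cases "h - 1 \<le> i")
        case True
        then show ?thesis using key[of i] i gS[OF i] by auto
      next
        case False
        define j where "j = 2*h - 2 - i"
        have j: "j < n" "h - 1 \<le> j" using False i hn h1 unfolding j_def m_def by auto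
        define a where "a = Hilbert_Choice.inv \<sigma> j"
        have sa: "\<sigma> a = j" unfolding a_def using permutes_inverses(1)[OF s] by simp
        have "a \<in> {0..<n}" unfolding a_def using permutes_in_image[OF permutes_inv[OF s]] j by simp
        then have "a + j = 2*h - 2" using key[of a] sa j by auto
        then have "a = i" using j_def False hn h1 by auto
        then show ?thesis using sa j_def gS[OF i] by auto
      qed
    qed
    have red: "det (B n) = signof g * det (mat m m (\<lambda>(i,j). B n $$ (i,j)))"
      using det_reduce[OF Bc less_imp_le[OF mn] gperm] one forced by blast
    have "mat m m (\<lambda>(i,j). B n $$ (i,j)) = B m"
      unfolding B_def using mn by (intro eq_matI) auto
    with red have "det (B n) = signof g * det (B m)" by simp
    moreover have "det (B m) \<in> {1, -1}" using less.IH[OF mn] .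
    moreover have "(signof g :: int) \<in> {1, -1}" by (rule signof_pm_one)
    ultimately show ?thesis by auto
  qed
qed

theorem mainTheorem5:
  fixes n :: nat
  assumes "n \<ge> 1"
  shows "det (B n) \<in> {1, -1}"
  using B_all by blast

end
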